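(* For integers $n \geq 2$, let $L_n(x) = \left\lfloor \frac{x(2^n - x)}{2^{n-2}} \right\rfloor$ for $x \in X_n = \{1, 2, \dots, 2^n - 1\}$, and call $n$ undesirable if there exists $x \in X_n$ with $L_n(x) = 2^{n-1}$. Then an integer $n \geq 2$ is undesirable if there exists an integer $m$ with $2^{n-2}\sqrt{2} - \sqrt{2}/4 \leq m \leq 2^{n-2}\sqrt{2}$. *)

theory Defs
  imports Complex_Main
begin

definition L :: "nat \<Rightarrow> int \<Rightarrow> int" where
  "L n x = \<lfloor>(real_of_int x * (2 ^ n - real_of_int x)) / 2 ^ (n - 2)\<rfloor>"

definition X :: "nat \<Rightarrow> int set" where
  "X n = {1 .. 2 ^ n - 1}"

definition undesirable :: "nat \<Rightarrow> bool" where
  "undesirable n \<longleftrightarrow> (\<exists>x \<in> X n. L n x = 2 ^ (n - 1))"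

end

theory Submission
  imports Defs
begin

theorem lemma2p2:
  fixes n :: nat
  assumes "n \<ge> 2"
    and "\<exists>m :: int. 2 ^ (n - 2) * sqrt 2 - sqrt 2 / 4 \<le> real_of_int m
                   \<and> real_of_int m \<le> 2 ^ (n - 2) * sqrt 2"
  shows "undesirable n"
proof -
  obtain m :: int where m1: "2 ^ (n - 2) * sqrt 2 - sqrt 2 / 4 \<le> real_of_int m"
    and m2: "real_of_int m \<le> 2 ^ (n - 2) * sqrt 2" using assms(2) by blast
  define k :: int where "k = 2 ^ (n - 2)"
  have k1: "k \<ge> 1" unfolding k_def by simp
  have rk: "real_of_int k = 2 ^ (n - 2)" unfolding k_def by simp
  have N: "(2::int) ^ n = 4 * k"
  proof -
    obtain j where "n = j + 2" using assms(1) le_Suc_ex by (metis add.commute)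
    thus ?thesis by (simp add: power_add k_def)
  qed
  have rN: "(2::real) ^ n = 4 * real_of_int k"
    using N by (metis of_int_mult of_int_numeral of_int_power)
  have s2: "sqrt 2 * sqrt 2 = (2::real)" by simp
  have m1': "(real_of_int k - 1/4) * sqrt 2 \<le> real_of_int m" using m1 rk by (simp add: algebra_simps)
  have m2': "real_of_int m \<le> real_of_int k * sqrt 2" using m2 rk by simp
  have pos: "0 \<le> (real_of_int k - 1/4) * sqrt 2" using k1 by simp
  have m0: "0 \<le> m" using pos m1' by linarith
  have "real_of_int m * real_of_int m \<le> (real_of_int k * sqrt 2) * (real_of_int k * sqrt 2)"
    using m2' m0 by (intro mult_mono) auto
  also have "\<dots> = 2 * real_of_int k ^ 2" using s2 by (simp add: algebra_simps power2_eq_square)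
  finally have "real_of_int (m*m) \<le> real_of_int (2*k^2)" by simp
  hence up: "m * m \<le> 2 * k^2" by linarith
  have "((real_of_int k - 1/4) * sqrt 2) * ((real_of_int k - 1/4) * sqrt 2) \<le> real_of_int m * real_of_int m"
    using m1' pos by (intro mult_mono) auto
  moreover have "((real_of_int k - 1/4) * sqrt 2) * ((real_of_int k - 1/4) * sqrt 2)
      = 2 * real_of_int k ^ 2 - real_of_int k + 1/8"
    using s2 by (simp add: algebra_simps power2_eq_square)
  ultimately have "real_of_int (2*k^2 - k) < real_of_int (m*m)" by simp
  hence lo: "2*k^2 - k < m*m" by linarith
  have mlt: "m < 2*k"
  proof (rule ccontr)
    assume "\<not> m < 2*k"
    hence "2*k \<le> m" by simp
    hence "(2*k)*(2*k) \<le> m*m" using k1 by (intro mult_mono) auto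
    moreover have "0 < k*k" using k1 by simp
    ultimately show False using up by (simp add: power2_eq_square)
  qed
  define x where "x = 2*k - m"
  have xX: "x \<in> X n" unfolding X_def x_def N using mlt m0 k1 by simp
  have eq: "real_of_int x * (2 ^ n - real_of_int x) / 2 ^ (n - 2)
      = real_of_int (4*k^2 - m*m) / real_of_int k"
    unfolding rN rk[symmetric] x_def by (simp add: algebra_simps power2_eq_square)
  have kr: "real_of_int k > 0" using k1 by simp
  have "L n x = 2*k"
    unfolding L_def eq
  proof (subst floor_eq_iff, rule conjI)
    have "real_of_int (2*k) * real_of_int k \<le> real_of_int (4*k^2 - m*m)"
      using up by (simp only: of_int_mult[symmetric] of_int_le_iff) (simp add: power2_eq_square)
    thus "real_of_int (2*k) \<le> real_of_int (4*k^2 - m*m) / real_of_int k"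
      using kr by (simp add: pos_le_divide_eq)
    have "real_of_int (4*k^2 - m*m) < (real_of_int (2*k) + 1) * real_of_int k"
    proof -
      have "4*k^2 - m*m < (2*k+1)*k" using lo by (simp add: algebra_simps power2_eq_square)
      hence "real_of_int (4*k^2 - m*m) < real_of_int ((2*k+1)*k)" by linarith
      thus ?thesis by (simp add: k_def)
    qed
    thus "real_of_int (4*k^2 - m*m) / real_of_int k < real_of_int (2*k) + 1"
      using kr by (simp add: divide_less_eq)
  qed
  moreover have "2*k = (2::int) ^ (n-1)"
  proof -
    obtain j where "n = j + 2" using assms(1) le_Suc_ex by (metis add.commute)
    thus ?thesis by (simp add: k_def)
  qed
  ultimately show ?thesis unfolding undesirable_def using xX by auto
qed

end
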